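(* Let $0<\epsilon\le0.66$ and let $a,b,c\in\mathbb R^d$ be distinct points such that $(a,b,c)$ is compatible (with respect to $\epsilon$) and $0.6231\,\frac{d(c,b)}{d(a,b)}\le1$. Then $$\angle abc>51.45^\circ+\arccos\!\left(0.6231\,\frac{d(c,b)}{d(a,b)}\right).$$ In particular, $\angle abc>102.9^\circ$.
   Context: $d(x,y)$ is Euclidean distance in $\mathbb R^d$ ($d\ge2$) and $B_x(r)$ is the closed ball of radius $r$ about $x$. For $a\ne b$, $X(a,b)$ is the set of $x\in\mathbb R^d$ with $d(x,a)=d(x,b)=\frac{d(a,b)}{\epsilon\sqrt{4-\epsilon^2}}$. A triple $(a,b,c)$ is compatible if $c\notin B_x(d(x,b))$ for all $x\in X(a,b)$ and $a\notin B_y(d(y,b))$ for all $y\in X(b,c)$. Angles are measured in degrees in $[0^\circ,180^\circ]$. *)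

theory Defs
  imports "HOL-Analysis.Analysis"
begin

definition angle_deg :: "'a::euclidean_space \<Rightarrow> 'a \<Rightarrow> 'a \<Rightarrow> real" where
  "angle_deg a b c =
     arccos (((a - b) \<bullet> (c - b)) / (norm (a - b) * norm (c - b))) * 180 / pi"

definition Xset :: "real \<Rightarrow> 'a::euclidean_space \<Rightarrow> 'a \<Rightarrow> 'a set" where
  "Xset eps a b = {x. dist x a = dist a b / (eps * sqrt (4 - eps\<^sup>2)) \<and>
                      dist x b = dist a b / (eps * sqrt (4 - eps\<^sup>2))}"

definition compatible :: "real \<Rightarrow> 'a::euclidean_space \<Rightarrow> 'a \<Rightarrow> 'a \<Rightarrow> bool" where
  "compatible eps a b c \<longleftrightarrow>
     (\<forall>x \<in> Xset eps a b. c \<notin> cball x (dist x b)) \<and>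
     (\<forall>y \<in> Xset eps b c. a \<notin> cball y (dist y b))"

end

theory Submission imports Defs begin


lemma unit_orth:
  fixes u :: "'a::euclidean_space"
  assumes "DIM('a) \<ge> 2"
  obtains w where "norm w = 1" "w \<bullet> u = 0"
proof -
  have "dim {u} < DIM('a)"
    using dim_le_card[of "{u}"] assms by auto
  then obtain x where "x \<noteq> 0" "\<And>y. y \<in> span {u} \<Longrightarrow> orthogonal x y"
    using orthogonal_to_subspace_exists by blast
  then have "orthogonal x u" by (simp add: span_base)
  then show ?thesis using that[of "x /\<^sub>R norm x"] \<open>x \<noteq> 0\<close>
    by (simp add: orthogonal_def)
qed

lemma geo:
  fixes p q z :: "'a::euclidean_space" and eps :: real
  assumes "DIM('a) \<ge> 2" "0 < eps" "eps < sqrt 2" "p \<noteq> q"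
    and H: "\<forall>x \<in> Xset eps p q. z \<notin> cball x (dist x q)"
  shows "norm (z - q)^2 > (p - q) \<bullet> (z - q) + (2 - eps^2)/(eps * sqrt (4 - eps^2)) *
             sqrt (norm (p - q)^2 * norm (z - q)^2 - ((p - q) \<bullet> (z - q))^2)"
proof -
  define v where "v = z - q"
  define e where "e = p - q"
  define L where "L = norm e"
  have L0: "L > 0" using assms(4) by (simp add: L_def e_def)
  define u where "u = e /\<^sub>R L"
  have nu: "norm u = 1" using L0 by (simp add: u_def L_def)
  have uu: "u \<bullet> u = 1" using nu by (simp add: norm_eq_1)
  define g where "g = v - (v \<bullet> u) *\<^sub>R u"
  have gu: "g \<bullet> u = 0" by (simp add: g_def inner_diff_left uu)
  have gg: "g \<bullet> g = v \<bullet> v - (v \<bullet> u)^2"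
    by (simp add: g_def inner_diff_left inner_diff_right uu inner_commute power2_eq_square)
  obtain w where nw: "norm w = 1" and wu: "w \<bullet> u = 0" and vw: "v \<bullet> w = norm g"
  proof (cases "g = 0")
    case True
    obtain w where "norm w = 1" "w \<bullet> u = 0" using unit_orth assms(1) by blast
    moreover have "v \<bullet> w = 0"
    proof -
      have "v = (v \<bullet> u) *\<^sub>R u" using True by (simp add: g_def)
      then have "v \<bullet> w = (v \<bullet> u) * (u \<bullet> w)" by (metis inner_scaleR_left)
      then show ?thesis using \<open>w \<bullet> u = 0\<close> by (simp add: inner_commute)
    qed
    ultimately show ?thesis using that True by simp
  next
    case False
    have "v \<bullet> g = g \<bullet> g" by (simp add: g_def inner_diff_left inner_diff_right uu inner_commute)
    then show ?thesis using that[of "g /\<^sub>R norm g"] False gu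
      by (simp add: power2_norm_eq_inner[symmetric] power2_eq_square)
  qed
  have s4: "4 - eps^2 > 0" using assms(3) by (smt (verit) assms(2) real_sqrt_pow2 power_strict_mono zero_le_numeral zero_less_numeral)
  define K where "K = (2 - eps^2)/(eps * sqrt (4 - eps^2))"
  define R where "R = L / (eps * sqrt (4 - eps^2))"
  define h where "h = K * L / 2"
  have KR: "(K*L/2)^2 + L^2/4 = R^2"
    using s4 assms(2) by (simp add: K_def R_def field_simps power2_eq_square)
  define x where "x = q + e /\<^sub>R 2 + h *\<^sub>R w"
  have ew: "e \<bullet> w = 0" using wu L0 by (simp add: u_def inner_commute)
  have ee: "e \<bullet> e = L^2" by (simp add: L_def power2_norm_eq_inner)
  have ww: "w \<bullet> w = 1" using nw by (simp add: norm_eq_1)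
  have dq: "dist x q = R"
  proof -
    have "(dist x q)^2 = (e /\<^sub>R 2 + h *\<^sub>R w) \<bullet> (e /\<^sub>R 2 + h *\<^sub>R w)"
      by (simp add: x_def dist_norm power2_norm_eq_inner)
    also have "\<dots> = L^2/4 + h^2" by (simp add: inner_add_left inner_add_right ew ee ww inner_commute power2_eq_square)
    finally show ?thesis using KR h_def L0 assms(2) s4
      by (metis R_def add.commute divide_nonneg_nonneg zero_le_dist less_le mult_nonneg_nonneg power2_eq_iff_nonneg real_sqrt_ge_zero)
  qed
  have dp: "dist x p = R"
  proof -
    have "x - p = (e /\<^sub>R 2 + h *\<^sub>R w) - e" by (simp add: x_def e_def algebra_simps)
    then have "(dist x p)^2 = ((e /\<^sub>R 2 + h *\<^sub>R w) - e) \<bullet> ((e /\<^sub>R 2 + h *\<^sub>R w) - e)"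
      by (simp add: dist_norm power2_norm_eq_inner)
    also have "\<dots> = L^2/4 + h^2" by (simp add: inner_diff_left inner_diff_right inner_add_left inner_add_right ew ee ww inner_commute power2_eq_square)
    finally show ?thesis using KR h_def L0 assms(2) s4
      by (metis R_def add.commute divide_nonneg_nonneg zero_le_dist less_le mult_nonneg_nonneg power2_eq_iff_nonneg real_sqrt_ge_zero)
  qed
  have "x \<in> Xset eps p q" using dp dq by (simp add: Xset_def R_def L_def e_def dist_norm)
  then have "dist x z > R" using H dq by force
  then have "(dist x z)^2 > R^2" using L0 assms(2) s4
    by (smt (verit) R_def divide_nonneg_nonneg mult_nonneg_nonneg power_strict_mono real_sqrt_ge_zero zero_less_numeral)
  moreover have "(dist x z)^2 = (v - (e /\<^sub>R 2 + h *\<^sub>R w)) \<bullet> (v - (e /\<^sub>R 2 + h *\<^sub>R w))"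
    by (simp add: x_def dist_norm power2_norm_eq_inner v_def algebra_simps)
  moreover have "\<dots> = v \<bullet> v - v \<bullet> e - 2 * h * (v \<bullet> w) + (L^2/4 + h^2)"
    by (simp add: inner_diff_left inner_diff_right inner_add_left inner_add_right ew ee ww inner_commute power2_eq_square)
  ultimately have "v \<bullet> v > v \<bullet> e + 2 * h * norm g" using KR h_def vw by (simp add: algebra_simps)
  moreover have "L * norm g = sqrt (L^2 * norm v^2 - (e \<bullet> v)^2)"
  proof -
    have "e \<bullet> v = L * (v \<bullet> u)" using L0 by (simp add: u_def inner_commute)
    moreover have "norm g = sqrt (v \<bullet> v - (v \<bullet> u)^2)" using gg by (simp add: norm_eq_sqrt_inner)
    moreover have "L * sqrt (v \<bullet> v - (v \<bullet> u)^2) = sqrt (L^2 * (v \<bullet> v - (v \<bullet> u)^2))"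
      using L0 by (simp add: real_sqrt_mult)
    ultimately show ?thesis
      by (simp add: power_mult_distrib right_diff_distrib power2_norm_eq_inner)
  qed
  ultimately show ?thesis
    by (simp add: v_def e_def L_def K_def h_def power2_norm_eq_inner inner_commute mult.assoc)
qed


lemma cos_poly: "(\<Sum>m<8. cos_coeff m * (y::real) ^ m) = 1 - y^2/2 + y^4/24 - y^6/720"
  by (simp add: lessThan_nat_numeral cos_coeff_def fact_numeral)

lemma num1: "1 - (0.6728::real)^2/2 + 0.6728^4/24 - 0.6728^6/720 + 0.6728^8/40320 < 0.7822"
  by (simp add: power_divide)

lemma cos_num: "cos (0.6728::real) < 0.7822"
proof -
  define y :: real where "y = 0.6728"
  have "\<exists>t. 0 < t \<and> t < y \<and>
    cos y = (\<Sum>m<8. cos_coeff m * y ^ m) + (cos (t + 1/2 * real 8 * pi) / fact 8) * y ^ 8"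
    by (rule Maclaurin_cos_expansion2) (simp_all add: y_def)
  then obtain t where t: "cos y = (\<Sum>m<8. cos_coeff m * y ^ m) + (cos (t + 1/2 * real 8 * pi) / fact 8) * y ^ 8"
    by blast
  have f: "(fact 8 :: real) = 40320" by (simp add: fact_numeral)
  have "cos (t + 1/2 * real 8 * pi) \<le> 1" by (rule cos_le_one)
  then have "(cos (t + 1/2 * real 8 * pi) / fact 8) * y ^ 8 \<le> (1/40320) * y^8"
    unfolding f by (intro mult_right_mono) (auto simp: y_def)
  then have "(cos (t + 1/2 * real 8 * pi) / fact 8) * y ^ 8 \<le> y^8/40320" by simp
  moreover have "1 - y^2/2 + y^4/24 - y^6/720 + y^8/40320 < 0.7822"
    unfolding y_def by (rule num1)
  ultimately have "cos y < 0.7822" using t unfolding cos_poly by linarith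
  then show ?thesis by (simp add: y_def)
qed

lemma alpha_num: "arccos (0.7822::real) < 38.55 * pi / 180"
proof -
  have p: "38.55 * pi / 180 \<ge> 0.6728" "38.55 * pi / 180 \<le> pi" using pi_approx pi_gt3 by auto
  have "cos (38.55 * pi / 180) \<le> cos 0.6728"
    using p by (intro cos_monotone_0_pi_le) auto
  with cos_num have c: "cos (38.55 * pi / 180) < 0.7822" by simp
  show ?thesis
  proof (rule ccontr)
    assume "\<not> ?thesis"
    then have "cos (arccos 0.7822) \<le> cos (38.55 * pi / 180)"
      using p arccos_bounded[of "0.7822"] by (intro cos_monotone_0_pi_le) auto
    with c show False by simp
  qed
qed

lemma trig:
  fixes phi al m :: real
  assumes "0 \<le> phi" "phi \<le> pi" "0 < al" "al < pi/2" "0 < m" "m \<le> 1"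
    and "sin (phi + al) < m * sin al"
  shows "phi > pi/2 - al + arccos (m * sin al)"
proof -
  have sa: "0 < sin al" "sin al \<le> 1" using assms(3,4) pi_gt3 by (simp_all add: sin_gt_zero)
  have "\<not> phi + al \<le> pi/2"
  proof
    assume "phi + al \<le> pi/2"
    then have "sin al \<le> sin (phi + al)" using assms by (intro sin_monotone_2pi_le) auto
    moreover have "m * sin al \<le> sin al" using sa assms(6) by (simp add: mult_left_le_one_le)
    ultimately show False using assms(7) by linarith
  qed
  define th where "th = phi + al - pi/2"
  have th: "0 \<le> th" "th \<le> pi" using assms \<open>\<not> phi + al \<le> pi/2\<close> by (auto simp: th_def)
  have "cos th = cos (- (pi/2 - (phi + al)))" by (simp add: th_def)
  also have "\<dots> = cos (pi/2 - (phi + al))" by (rule cos_minus)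
  also have "\<dots> = sin (phi + al)" by (simp add: cos_sin_eq)
  finally have cth: "cos th = sin (phi + al)" .
  have ms0: "0 < m * sin al" using sa assms(5) by simp
  have ms: "-1 \<le> m * sin al" "m * sin al \<le> 1" using ms0 apply linarith
    using sa assms(5,6) by (simp add: mult_le_one)
  have "cos th < cos (arccos (m * sin al))" using ms assms(7) cth by simp
  then have "arccos (m * sin al) < th"
    using th arccos_bounded[OF ms] by (subst (asm) cos_mono_less_eq) auto
  then show ?thesis by (simp add: th_def)
qed



theorem lemma3p13:
  fixes a b c :: "'a::euclidean_space" and eps :: real
  assumes "DIM('a) \<ge> 2"
    and "0 < eps" and "eps \<le> 0.66"
    and "a \<noteq> b" and "b \<noteq> c" and "a \<noteq> c"
    and "compatible eps a b c"
    and "0.6231 * (dist c b / dist a b) \<le> 1"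
  shows "angle_deg a b c > 51.45 + arccos (0.6231 * (dist c b / dist a b)) * 180 / pi
         \<and> angle_deg a b c > 102.9"
proof -
  define L where "L = norm (a - b)"
  define r where "r = norm (c - b)"
  define P where "P = (a - b) \<bullet> (c - b)"
  have L0: "L > 0" using assms(4) by (simp add: L_def)
  have r0: "r > 0" using assms(5) by (simp add: r_def)
  have tdist: "dist c b / dist a b = r / L" by (simp add: r_def L_def dist_norm)
  define t where "t = r / L"
  have t0: "t > 0" using L0 r0 by (simp add: t_def)
  have PLr: "\<bar>P\<bar> \<le> L * r" unfolding P_def L_def r_def by (rule Cauchy_Schwarz_ineq2)
  define C where "C = P / (L * r)"
  have C1: "-1 \<le> C" "C \<le> 1" using PLr L0 r0 by (auto simp: C_def divide_le_eq le_divide_eq abs_le_iff)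
  define phi where "phi = arccos C"
  have ang: "angle_deg a b c = phi * 180 / pi"
    by (simp add: angle_deg_def phi_def C_def P_def L_def r_def)
  have phib: "0 \<le> phi" "phi \<le> pi" using arccos_bounded[OF C1] by (auto simp: phi_def)
  define S where "S = sqrt (1 - C^2)"
  have cphi: "cos phi = C" using C1 by (simp add: phi_def cos_arccos)
  have sphi: "sin phi = S" using C1 by (simp add: phi_def sin_arccos S_def)
  define K where "K = (2 - eps^2)/(eps * sqrt (4 - eps^2))"
  have e2: "eps^2 \<le> 0.4356"
  proof -
    have "eps^2 \<le> 0.66^2" using assms(2,3) by (intro power_mono) auto
    then show ?thesis by (simp add: power_divide)
  qed
  have eps2: "eps < sqrt 2" using e2 by (intro real_less_rsqrt) simp
  have PC: "P = L * r * C" using L0 r0 by (simp add: C_def)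
  have sq: "sqrt (L^2 * r^2 - P^2) = L * r * S"
  proof -
    have "L^2 * r^2 - P^2 = (L * r)^2 * (1 - C^2)" by (simp add: PC power_mult_distrib algebra_simps)
    then show ?thesis using L0 r0 by (simp add: S_def real_sqrt_mult)
  qed
  have g1: "r^2 > P + K * (L * r * S)"
    using geo[OF assms(1,2) eps2 assms(4), of c] assms(7)
    by (simp add: compatible_def K_def L_def r_def P_def sq[unfolded L_def r_def P_def])
  have X: "Xset eps b c = Xset eps c b" by (auto simp: Xset_def dist_commute)
  have g2: "L^2 > P + K * (L * r * S)"
    using geo[OF assms(1,2) eps2, of c b a] assms(5,7) X
    by (simp add: compatible_def K_def L_def r_def P_def inner_commute mult.commute
                  sq[unfolded L_def r_def P_def])
  have h1: "t > C + K * S"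
  proof -
    have "r * r > L * r * (C + K * S)" using g1 PC by (simp add: power2_eq_square algebra_simps)
    then have "r > L * (C + K * S)" using r0 by (simp add: mult.commute mult.left_commute)
    then show ?thesis using L0 by (simp add: t_def pos_less_divide_eq mult.commute)
  qed
  have h2: "1 / t > C + K * S"
  proof -
    have "L * L > r * L * (C + K * S)" using g2 PC by (simp add: power2_eq_square algebra_simps)
    then have "L > r * (C + K * S)" using L0 by (simp add: mult.commute mult.left_commute)
    then show ?thesis using r0 by (simp add: t_def pos_less_divide_eq mult.commute)
  qed
  define ca where "ca = 1 - eps^2/2"
  have ca1: "0.7822 \<le> ca" "ca < 1"
  proof -
    show "0.7822 \<le> ca" using e2 by (simp add: ca_def)
    show "ca < 1" using assms(2) by (simp add: ca_def)
  qed
  define al where "al = arccos ca"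
  have cal: "cos al = ca" using ca1 by (simp add: al_def cos_arccos)
  have sal: "sin al = sqrt (1 - ca^2)" using ca1 by (simp add: al_def sin_arccos)
  have sal2: "sin al = eps * sqrt (4 - eps^2) / 2"
  proof -
    have "1 - ca^2 = (eps/2)^2 * (4 - eps^2)" by (simp add: ca_def power2_eq_square field_simps)
    then show ?thesis using assms(2) by (simp add: sal real_sqrt_mult)
  qed
  have s4: "4 - eps^2 > 0" using e2 by simp
  have sq4: "sqrt (4 - eps^2) > 0" using s4 by simp
  have "eps * sqrt (4 - eps^2) > 0" using sq4 assms(2) by simp
  then have sal0: "sin al > 0" using sal2 by simp
  have KK: "K = ca / sin al" using sq4 assms(2) by (simp add: K_def sal2 ca_def field_simps)
  have CKS: "C + K * S = sin (phi + al) / sin al"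
    using sal0 by (simp add: KK sin_add cphi sphi cal field_simps)
  have al0: "0 < al"
  proof -
    have "arccos 1 < arccos ca" using ca1 by (intro arccos_less_arccos) auto
    then show ?thesis by (simp add: al_def)
  qed
  have alnum: "al < 38.55 * pi / 180"
  proof -
    have "al \<le> arccos 0.7822" unfolding al_def using ca1 by (intro arccos_le_arccos) auto
    then show ?thesis using alpha_num by linarith
  qed
  have al2: "al < pi/2" using alnum pi_gt3 by simp
  have salb: "sin al \<le> 0.6231"
  proof -
    have "1 - ca^2 \<le> 0.6231^2"
    proof -
      have "0.7822^2 \<le> ca^2" using ca1 by (intro power_mono) auto
      then show ?thesis by (simp add: power_divide)
    qed
    then have "sqrt (1 - ca^2) \<le> sqrt (0.6231^2)" by (rule real_sqrt_le_mono)
    then show ?thesis by (simp add: sal)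
  qed
  define m where "m = min t (1/t)"
  have m0a: "0 < m" using t0 by (simp add: m_def)
  have m0c: "m \<le> t" by (simp add: m_def)
  have m0b: "m \<le> 1"
  proof (cases "t \<le> 1")
    case True then show ?thesis using m0c by linarith
  next
    case False
    then have "1/t \<le> 1" by simp
    moreover have "m \<le> 1/t" by (simp add: m_def)
    ultimately show ?thesis by linarith
  qed
  note m0 = m0a m0b m0c
  have msin: "sin (phi + al) < m * sin al"
  proof -
    have "sin (phi + al) / sin al < m" using h1 h2 CKS by (simp add: m_def)
    then show ?thesis using sal0 by (simp add: pos_divide_less_eq)
  qed
  have main: "phi > pi/2 - al + arccos (m * sin al)"
    by (rule trig[OF phib al0 al2 m0(1,2) msin])
  have ms1: "-1 \<le> m * sin al" using mult_pos_pos[OF m0(1) sal0] by simp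
  have ms2: "m * sin al \<le> sin al" using m0 sal0 by (simp add: mult_left_le_one_le)
  have ms3: "m * sin al \<le> 0.6231 * t"
  proof -
    have "m * sin al \<le> t * sin al" using m0 sal0 by (simp add: mult_right_mono)
    also have "\<dots> \<le> t * 0.6231" using t0 salb by (simp add: mult_left_mono)
    finally show ?thesis by simp
  qed
  have tt: "0.6231 * t \<le> 1" using assms(8) tdist by (simp add: t_def)
  have A1: "arccos (0.6231 * t) \<le> arccos (m * sin al)"
    using ms1 ms3 tt by (intro arccos_le_arccos) auto
  have A2: "pi/2 - al \<le> arccos (m * sin al)"
  proof -
    have "arccos (sin al) \<le> arccos (m * sin al)"
      using ms1 ms2 sal0 by (intro arccos_le_arccos) (auto simp: sin_le_one)
    moreover have "arccos (sin al) = pi/2 - al"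
    proof -
      have "sin al = cos (pi/2 - al)" by (simp add: cos_sin_eq)
      then show ?thesis using al0 al2 by (simp add: arccos_cos)
    qed
    ultimately show ?thesis by simp
  qed
  have p1: "phi > 51.45 * pi / 180 + arccos (0.6231 * t)" using main A1 alnum by simp
  have p2: "phi > 102.9 * pi / 180" using main A2 alnum by simp
  have "(51.45 * pi / 180 + arccos (0.6231 * t)) * (180 / pi) < phi * (180 / pi)"
    by (rule mult_strict_right_mono[OF p1]) simp
  then have "phi * 180 / pi > 51.45 + arccos (0.6231 * t) * 180 / pi"
    by (simp add: distrib_right add_divide_distrib)
  moreover have "(102.9 * pi / 180) * (180 / pi) < phi * (180 / pi)"
    by (rule mult_strict_right_mono[OF p2]) simp
  then have "phi * 180 / pi > 102.9" by simp
  ultimately show ?thesis unfolding ang tdist t_def[symmetric] by blast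
qed

end
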